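(* Let $\mathbb{T}=\mathbb{R}/2\pi\mathbb{Z}$, let $(a_k)_{k\ge1},(b_k)_{k\ge1}$ be independent stationary centered Gaussian sequences with common correlation function $\rho$ ($\mathbb{E}[a_ka_l]=\mathbb{E}[b_kb_l]=\rho(k-l)$), whose spectral measure $\mu$ (defined by $\rho(k)=\frac1{2\pi}\int_{\mathbb{T}}e^{-iku}d\mu(u)$) has a continuous positive density $\psi$ with respect to Lebesgue measure on $\mathbb{T}$. Let $X_n(s)=\frac{1}{\sqrt n}\sum_{k=1}^n(a_k\cos(ks)+b_k\sin(ks))$ and $r_n(s,t)=\mathbb{E}[X_n(s)X_n(t)]$. Let $a,b\in\{0,1\}$ and $0<\alpha<1$. Then there is a constant $C$ such that for all $n\ge1$ and all $s,t\in\mathbb{T}$, \[|r_n^{(a,b)}(s,t)|\le C\,\frac{n^{a+b}}{(n\,\mathrm{dist}(s,t))^{\alpha}} .\]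
   Context: $r_n^{(a,b)}=\partial_1^a\partial_2^b r_n$. For $s,t\in\mathbb{T}$, $\mathrm{dist}(s,t)$ is the distance from $s-t$ to $2\pi\mathbb{Z}$. *)

theory Defs
  imports "HOL-Probability.Probability"
begin

text \<open>Joint Gaussianity of a family of real random variables indexed by I:
  every finite linear combination is normally distributed (possibly degenerate,
  i.e. almost surely constant).\<close>
definition gaussian_family :: "'w measure \<Rightarrow> ('i \<Rightarrow> 'w \<Rightarrow> real) \<Rightarrow> 'i set \<Rightarrow> bool" where
  "gaussian_family M X I \<longleftrightarrow>
     (\<forall>J c. finite J \<and> J \<subseteq> I \<longrightarrow>
        (\<exists>m \<sigma>. \<sigma> \<ge> 0 \<and>
           (\<sigma> = 0 \<longrightarrow> (AE \<omega> in M. (\<Sum>j\<in>J. c j * X j \<omega>) = m)) \<and>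
           (\<sigma> > 0 \<longrightarrow> distributed M lborel (\<lambda>\<omega>. \<Sum>j\<in>J. c j * X j \<omega>) (normal_density m \<sigma>))))"

definition Xn :: "(nat \<Rightarrow> 'w \<Rightarrow> real) \<Rightarrow> (nat \<Rightarrow> 'w \<Rightarrow> real) \<Rightarrow> nat \<Rightarrow> real \<Rightarrow> 'w \<Rightarrow> real" where
  "Xn a b n s \<omega> = (1 / sqrt (real n)) *
     (\<Sum>k=1..n. a k \<omega> * cos (real k * s) + b k \<omega> * sin (real k * s))"

definition rn :: "'w measure \<Rightarrow> (nat \<Rightarrow> 'w \<Rightarrow> real) \<Rightarrow> (nat \<Rightarrow> 'w \<Rightarrow> real) \<Rightarrow> nat \<Rightarrow> real \<Rightarrow> real \<Rightarrow> real" where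
  "rn M a b n s t = integral\<^sup>L M (\<lambda>\<omega>. Xn a b n s \<omega> * Xn a b n t \<omega>)"

definition rnd :: "'w measure \<Rightarrow> (nat \<Rightarrow> 'w \<Rightarrow> real) \<Rightarrow> (nat \<Rightarrow> 'w \<Rightarrow> real) \<Rightarrow> nat \<Rightarrow> nat \<Rightarrow> nat \<Rightarrow> real \<Rightarrow> real \<Rightarrow> real" where
  "rnd M a b p q n s t = ((deriv ^^ p) (\<lambda>x. ((deriv ^^ q) (\<lambda>y. rn M a b n x y)) t)) s"

definition tdist :: "real \<Rightarrow> real \<Rightarrow> real" where
  "tdist s t = (INF k::int. \<bar>s - t - 2 * pi * real_of_int k\<bar>)"

end

theory Submission
  imports Defs
begin


lemma sq_int_mult:
  fixes f g :: "'w \<Rightarrow> real"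
  assumes "f \<in> borel_measurable M" "g \<in> borel_measurable M"
    "integrable M (\<lambda>x. (f x)\<^sup>2)" "integrable M (\<lambda>x. (g x)\<^sup>2)"
  shows "integrable M (\<lambda>x. f x * g x)"
proof (rule Bochner_Integration.integrable_bound[of _ "\<lambda>x. (f x)\<^sup>2 + (g x)\<^sup>2"])
  show "integrable M (\<lambda>x. (f x)\<^sup>2 + (g x)\<^sup>2)" using assms by auto
  show "(\<lambda>x. f x * g x) \<in> borel_measurable M" using assms by measurable
  show "AE x in M. norm (f x * g x) \<le> norm ((f x)\<^sup>2 + (g x)\<^sup>2)"
  proof (rule AE_I2)
    fix x
    have "\<bar>f x * g x\<bar> \<le> (f x)\<^sup>2 + (g x)\<^sup>2"
      using sum_squares_bound[of "f x" "g x"] sum_squares_bound[of "- f x" "g x"]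
      by (auto simp: abs_if split: if_splits)
    then show "norm (f x * g x) \<le> norm ((f x)\<^sup>2 + (g x)\<^sup>2)" by simp
  qed
qed

lemma rn_formula:
  fixes M :: "'w measure" and a b :: "nat \<Rightarrow> 'w \<Rightarrow> real" and \<rho> :: "int \<Rightarrow> real"
  assumes P: "prob_space M"
    and ma: "\<forall>k\<ge>1. a k \<in> borel_measurable M" and mb: "\<forall>k\<ge>1. b k \<in> borel_measurable M"
    and ia: "\<forall>k\<ge>1. integrable M (\<lambda>\<omega>. (a k \<omega>)\<^sup>2)"
    and ib: "\<forall>k\<ge>1. integrable M (\<lambda>\<omega>. (b k \<omega>)\<^sup>2)"
    and ca: "\<forall>k\<ge>1. integral\<^sup>L M (a k) = 0" and cb: "\<forall>k\<ge>1. integral\<^sup>L M (b k) = 0"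
    and cova: "\<forall>k\<ge>1. \<forall>l\<ge>1. integral\<^sup>L M (\<lambda>\<omega>. a k \<omega> * a l \<omega>) = \<rho> (int k - int l)"
    and covb: "\<forall>k\<ge>1. \<forall>l\<ge>1. integral\<^sup>L M (\<lambda>\<omega>. b k \<omega> * b l \<omega>) = \<rho> (int k - int l)"
    and indep: "prob_space.indep_var M
        (Pi\<^sub>M {1..} (\<lambda>_. borel)) (\<lambda>\<omega>. \<lambda>k\<in>{1..}. a k \<omega>)
        (Pi\<^sub>M {1..} (\<lambda>_. borel)) (\<lambda>\<omega>. \<lambda>k\<in>{1..}. b k \<omega>)"
  shows "rn M a b n x y = (1 / real n) * (\<Sum>k=1..n. \<Sum>l=1..n. \<rho> (int k - int l) * cos (real k * x - real l * y))"
proof -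
  interpret prob_space M by (rule P)
  have iab: "integrable M (\<lambda>\<omega>. a k \<omega> * b l \<omega>)" "integrable M (\<lambda>\<omega>. b l \<omega> * a k \<omega>)"
     "integrable M (\<lambda>\<omega>. a k \<omega> * a l \<omega>)" "integrable M (\<lambda>\<omega>. b k \<omega> * b l \<omega>)"
    if "k \<ge> 1" "l \<ge> 1" for k l
    using sq_int_mult[of "a k" M "b l"] sq_int_mult[of "b l" M "a k"] sq_int_mult[of "a k" M "a l"]
      sq_int_mult[of "b k" M "b l"] that ma mb ia ib by auto
  have ind: "indep_var borel (a k) borel (b l)" if "k \<ge> 1" "l \<ge> 1" for k l
  proof -
    have "indep_var borel ((\<lambda>f. f k) \<circ> (\<lambda>\<omega>. \<lambda>k\<in>{1..}. a k \<omega>)) borel ((\<lambda>f. f l) \<circ> (\<lambda>\<omega>. \<lambda>k\<in>{1..}. b k \<omega>))"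
      by (rule indep_var_compose[OF indep]) (use that in \<open>auto intro!: measurable_component_singleton\<close>)
    moreover have "((\<lambda>f. f k) \<circ> (\<lambda>\<omega>. \<lambda>k\<in>{1..}. a k \<omega>)) = a k" "((\<lambda>f. f l) \<circ> (\<lambda>\<omega>. \<lambda>k\<in>{1..}. b k \<omega>)) = b l"
      using that by (auto simp: fun_eq_iff)
    ultimately show ?thesis by simp
  qed
  have inta: "integrable M (a k)" if "k \<ge> 1" for k
    using sq_int_mult[of "a k" M "\<lambda>_. 1"] that ma ia by auto
  have intb: "integrable M (b k)" if "k \<ge> 1" for k
    using sq_int_mult[of "b k" M "\<lambda>_. 1"] that mb ib by auto
  have Eab: "integral\<^sup>L M (\<lambda>\<omega>. a k \<omega> * b l \<omega>) = 0" if "k \<ge> 1" "l \<ge> 1" for k l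
    using indep_var_lebesgue_integral[OF ind[OF that] inta intb] that ca cb by simp
  have Eba: "integral\<^sup>L M (\<lambda>\<omega>. b l \<omega> * a k \<omega>) = 0" if "k \<ge> 1" "l \<ge> 1" for k l
    using Eab[OF that] by (simp add: mult.commute)
  define u where "u k \<omega> = a k \<omega> * cos (real k * x) + b k \<omega> * sin (real k * x)" for k \<omega>
  define v where "v l \<omega> = a l \<omega> * cos (real l * y) + b l \<omega> * sin (real l * y)" for l \<omega>
  have trm: "integral\<^sup>L M (\<lambda>\<omega>. u k \<omega> * v l \<omega>) = \<rho> (int k - int l) * cos (real k * x - real l * y)
         \<and> integrable M (\<lambda>\<omega>. u k \<omega> * v l \<omega>)"
    if "k \<ge> 1" "l \<ge> 1" for k l
  proof -
    have e: "(\<lambda>\<omega>. u k \<omega> * v l \<omega>) = (\<lambda>\<omega>. (cos (real k * x) * cos (real l * y)) * (a k \<omega> * a l \<omega>)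
       + (cos (real k * x) * sin (real l * y)) * (a k \<omega> * b l \<omega>)
       + (sin (real k * x) * cos (real l * y)) * (b k \<omega> * a l \<omega>)
       + (sin (real k * x) * sin (real l * y)) * (b k \<omega> * b l \<omega>))"
      by (auto simp: u_def v_def fun_eq_iff algebra_simps)
    have ik: "integrable M (\<lambda>\<omega>. b k \<omega> * a l \<omega>)" using iab(2)[of l k] that by simp
    note I = iab[OF that] ik
    have "integral\<^sup>L M (\<lambda>\<omega>. u k \<omega> * v l \<omega>) =
       (cos (real k * x) * cos (real l * y)) * integral\<^sup>L M (\<lambda>\<omega>. a k \<omega> * a l \<omega>)
     + (cos (real k * x) * sin (real l * y)) * integral\<^sup>L M (\<lambda>\<omega>. a k \<omega> * b l \<omega>)
     + (sin (real k * x) * cos (real l * y)) * integral\<^sup>L M (\<lambda>\<omega>. b k \<omega> * a l \<omega>)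
     + (sin (real k * x) * sin (real l * y)) * integral\<^sup>L M (\<lambda>\<omega>. b k \<omega> * b l \<omega>)"
      unfolding e using I by (simp del: integral_mult_right_zero add: integral_add integral_mult_right)
    also have "\<dots> = \<rho> (int k - int l) * cos (real k * x - real l * y)"
      using Eab[OF that] Eba[of l k] that cova covb by (simp add: cos_diff algebra_simps)
    finally show ?thesis unfolding e using I by simp

  qed
  have X: "Xn a b n x \<omega> * Xn a b n y \<omega> = (1 / real n) * (\<Sum>k=1..n. \<Sum>l=1..n. u k \<omega> * v l \<omega>)" for \<omega>
  proof -
    have "Xn a b n x \<omega> * Xn a b n y \<omega> = (1 / sqrt (real n) * (1 / sqrt (real n))) * ((\<Sum>k=1..n. u k \<omega>) * (\<Sum>l=1..n. v l \<omega>))"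
      by (simp add: Xn_def u_def v_def)
    also have "\<dots> = (1 / real n) * (\<Sum>k=1..n. \<Sum>l=1..n. u k \<omega> * v l \<omega>)"
      by (simp add: sum_product)
    finally show ?thesis .
  qed
  have "rn M a b n x y = (1 / real n) * (\<Sum>k=1..n. \<Sum>l=1..n. integral\<^sup>L M (\<lambda>\<omega>. u k \<omega> * v l \<omega>))"
  proof -
    have "integral\<^sup>L M (\<lambda>\<omega>. \<Sum>k=1..n. \<Sum>l=1..n. u k \<omega> * v l \<omega>)
        = (\<Sum>k=1..n. integral\<^sup>L M (\<lambda>\<omega>. \<Sum>l=1..n. u k \<omega> * v l \<omega>))"
      by (rule Bochner_Integration.integral_sum) (use trm in \<open>auto intro!: integrable_sum\<close>)
    also have "\<dots> = (\<Sum>k=1..n. \<Sum>l=1..n. integral\<^sup>L M (\<lambda>\<omega>. u k \<omega> * v l \<omega>))"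
      by (rule sum.cong[OF refl], rule Bochner_Integration.integral_sum) (use trm in auto)
    finally show ?thesis unfolding rn_def X by simp
  qed
  also have "\<dots> = (1 / real n) * (\<Sum>k=1..n. \<Sum>l=1..n. \<rho> (int k - int l) * cos (real k * x - real l * y))"
    using trm by (intro arg_cong[where f="\<lambda>z. _ * z"] sum.cong) auto
  finally show ?thesis .
qed



definition cc :: "nat \<Rightarrow> nat \<Rightarrow> complex" where "cc p q = \<i> ^ p * (- \<i>) ^ q"

definition Dfm :: "(int \<Rightarrow> real) \<Rightarrow> nat \<Rightarrow> nat \<Rightarrow> nat \<Rightarrow> real \<Rightarrow> real \<Rightarrow> real" where
  "Dfm \<rho> n p q x y = (1 / real n) * (\<Sum>k=1..n. \<Sum>l=1..n. \<rho> (int k - int l) * real k ^ p * real l ^ q *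
      Re (cc p q * exp (\<i> * complex_of_real (real k * x - real l * y))))"

lemma Re_cc:
  "Re (cc 0 0 * exp (\<i> * complex_of_real th)) = cos th"
  "Re (cc 0 1 * exp (\<i> * complex_of_real th)) = sin th"
  "Re (cc 1 0 * exp (\<i> * complex_of_real th)) = - sin th"
  "Re (cc 1 1 * exp (\<i> * complex_of_real th)) = cos th"
  by (simp_all add: cc_def Re_exp Im_exp)

lemma deriv_R:
  fixes \<rho> :: "int \<Rightarrow> real" and n :: nat
  defines "R \<equiv> (\<lambda>x y. (1 / real n) * (\<Sum>k=1..n. \<Sum>l=1..n. \<rho> (int k - int l) * cos (real k * x - real l * y)))"
  assumes "p \<le> 1" "q \<le> 1"
  shows "((deriv ^^ p) (\<lambda>x. (deriv ^^ q) (\<lambda>y. R x y) t)) s = Dfm \<rho> n p q s t"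
proof -
  have d1: "deriv (\<lambda>y. R x y) y = (1 / real n) * (\<Sum>k=1..n. \<Sum>l=1..n. \<rho> (int k - int l) * real l * sin (real k * x - real l * y))" for x y
    unfolding R_def
    by (rule DERIV_imp_deriv) (auto intro!: derivative_eq_intros DERIV_sum simp: sum_distrib_left algebra_simps)
  have d2: "deriv (\<lambda>x. R x y) x = (1 / real n) * (\<Sum>k=1..n. \<Sum>l=1..n. \<rho> (int k - int l) * (- real k) * sin (real k * x - real l * y))" for x y
    unfolding R_def
    by (rule DERIV_imp_deriv) (auto intro!: derivative_eq_intros DERIV_sum simp: sum_distrib_left algebra_simps)
  have d3: "deriv (\<lambda>x. (1 / real n) * (\<Sum>k=1..n. \<Sum>l=1..n. \<rho> (int k - int l) * real l * sin (real k * x - real l * y))) x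
     = (1 / real n) * (\<Sum>k=1..n. \<Sum>l=1..n. \<rho> (int k - int l) * real k * real l * cos (real k * x - real l * y))" for x y
    by (rule DERIV_imp_deriv) (auto intro!: derivative_eq_intros DERIV_sum simp: sum_distrib_left algebra_simps)
  consider "p = 0" "q = 0" | "p = 0" "q = 1" | "p = 1" "q = 0" | "p = 1" "q = 1" using assms by linarith
  then show ?thesis
  proof cases
    case 1 then show ?thesis unfolding Dfm_def R_def by (simp only: Re_cc power_0 mult_1_right funpow_0 id_apply)
  next
    case 2
    have "Dfm \<rho> n p q s t = (1 / real n) * (\<Sum>k=1..n. \<Sum>l=1..n. \<rho> (int k - int l) * real k ^ 0 * real l ^ 1 * sin (real k * s - real l * t))"
      unfolding Dfm_def 2 by (simp only: Re_cc)
    then show ?thesis using 2 by (simp add: d1)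
  next
    case 3
    have "Dfm \<rho> n p q s t = (1 / real n) * (\<Sum>k=1..n. \<Sum>l=1..n. \<rho> (int k - int l) * real k ^ 1 * real l ^ 0 * (- sin (real k * s - real l * t)))"
      unfolding Dfm_def 3 by (simp only: Re_cc)
    then show ?thesis using 3 by (simp add: d2)
  next
    case 4
    have "Dfm \<rho> n p q s t = (1 / real n) * (\<Sum>k=1..n. \<Sum>l=1..n. \<rho> (int k - int l) * real k ^ 1 * real l ^ 1 * cos (real k * s - real l * t))"
      unfolding Dfm_def 4 by (simp only: Re_cc)
    moreover have "(deriv ^^ p) (\<lambda>x. (deriv ^^ q) (\<lambda>y. R x y) t) = deriv (\<lambda>x. deriv (\<lambda>y. R x y) t)"
      using 4 by simp
    moreover have "(\<lambda>x. deriv (\<lambda>y. R x y) t) = (\<lambda>x. (1 / real n) * (\<Sum>k=1..n. \<Sum>l=1..n. \<rho> (int k - int l) * real l * sin (real k * x - real l * t)))"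
      by (rule ext, rule d1)
    ultimately show ?thesis using d3[where x=s and y=t] by (simp add: mult.assoc)
  qed
qed



lemma sin_ge_third:
  fixes x :: real assumes "0 \<le> x" "x \<le> pi/2" shows "x / 3 \<le> sin x"
proof (cases "x \<le> pi/3")
  case True
  have "(\<lambda>x. sin x - x/2) 0 \<le> (\<lambda>x. sin x - x/2) x"
  proof (rule DERIV_nonneg_imp_nondecreasing[OF assms(1)])
    fix y assume y: "0 \<le> y" "y \<le> x"
    have "cos (pi/3) \<le> cos y" using y True by (intro cos_monotone_0_pi_le) auto
    then have "cos y - 1/2 \<ge> 0" by (simp add: cos_60)
    moreover have "DERIV (\<lambda>x. sin x - x/2) y :> cos y - 1/2"
      by (auto intro!: derivative_eq_intros)
    ultimately show "\<exists>d. DERIV (\<lambda>x. sin x - x/2) y :> d \<and> d \<ge> 0" by blast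
  qed
  then show ?thesis using assms by simp
next
  case False
  have "sin (pi/3) \<le> sin x" using False assms by (intro sin_monotone_2pi_le) auto
  moreover have "sqrt 3 \<ge> 4/3"
    by (rule real_le_rsqrt) (simp add: power2_eq_square)
  moreover have "x / 3 \<le> 2/3" using assms pi_less_4 by simp
  ultimately show ?thesis by (simp add: sin_60)
qed

lemma norm_one_minus_exp:
  fixes w :: real assumes "\<bar>w\<bar> \<le> pi"
  shows "norm (1 - exp (\<i> * complex_of_real w)) \<ge> \<bar>w\<bar> / 3"
proof -
  have sq: "(norm (1 - exp (\<i> * complex_of_real w)))\<^sup>2 = (2 * sin (w/2))\<^sup>2"
  proof -
    have "(norm (1 - exp (\<i> * complex_of_real w)))\<^sup>2 = (1 - cos w)\<^sup>2 + (sin w)\<^sup>2"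
      by (simp add: cmod_power2 Re_exp Im_exp)
    also have "\<dots> = 2 - 2 * cos w" by (simp add: power2_eq_square algebra_simps)
    also have "cos w = 1 - 2 * (sin (w/2))\<^sup>2" using cos_double_sin[of "w/2"] by simp
    finally show ?thesis by (simp add: power2_eq_square)
  qed
  then have eq: "norm (1 - exp (\<i> * complex_of_real w)) = 2 * \<bar>sin (w/2)\<bar>"
    by (metis abs_mult abs_norm_cancel abs_numeral power2_eq_iff real_sqrt_abs)
  have "\<bar>w\<bar>/2 / 3 \<le> sin (\<bar>w\<bar>/2)" using assms by (intro sin_ge_third) auto
  moreover have "sin (\<bar>w\<bar>/2) = \<bar>sin (w/2)\<bar>"
    using assms sin_ge_zero[of "\<bar>w\<bar>/2"] by (cases "w \<ge> 0") auto
  ultimately show ?thesis unfolding eq by simp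
qed

lemma geo0:
  fixes z :: complex
  shows "(1 - z) * (\<Sum>k=1..n. z ^ k) = z - z ^ (n+1)"
proof (induction n)
  case (Suc n)
  have "(1 - z) * (\<Sum>k=1..Suc n. z ^ k) = (1 - z) * (\<Sum>k=1..n. z ^ k) + (1 - z) * z ^ (Suc n)"
    by (simp add: distrib_left)
  also have "\<dots> = z - z ^ (Suc n + 1)" unfolding Suc.IH by (simp add: algebra_simps)
  finally show ?case .
qed simp

lemma geo1:
  fixes z :: complex
  shows "(1 - z) * (\<Sum>k=1..n. of_nat k * z ^ k) = (\<Sum>k=1..n. z ^ k) - of_nat n * z ^ (n+1)"
proof (induction n)
  case (Suc n)
  have "(1 - z) * (\<Sum>k=1..Suc n. of_nat k * z ^ k) = (1 - z) * (\<Sum>k=1..n. of_nat k * z ^ k) + (1 - z) * (of_nat (Suc n) * z ^ (Suc n))"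
    by (simp add: distrib_left)
  also have "\<dots> = (\<Sum>k=1..Suc n. z ^ k) - of_nat (Suc n) * z ^ (Suc n + 1)" unfolding Suc.IH by (simp add: algebra_simps)
  finally show ?case .
qed simp

lemma kernel_bound:
  fixes v w :: real and n p :: nat
  assumes n: "n \<ge> 1" and p: "p \<le> 1" and w: "\<bar>w\<bar> \<le> pi"
    and vw: "exp (\<i> * complex_of_real v) = exp (\<i> * complex_of_real w)"
  shows "norm (\<Sum>k=1..n. of_nat k ^ p * exp (\<i> * complex_of_real v) ^ k) \<le> real n ^ p * (18 * real n / (9 + real n * \<bar>w\<bar>))"
proof -
  define z where "z = exp (\<i> * complex_of_real v)"
  have nz: "norm z = 1" by (simp add: z_def)
  have nzk: "norm (z ^ k) = 1" for k by (simp add: norm_power nz)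
  have triv: "norm (\<Sum>k=1..n. of_nat k ^ p * z ^ k) \<le> real n ^ p * real n"
  proof -
    have "norm (\<Sum>k=1..n. of_nat k ^ p * z ^ k) \<le> (\<Sum>k=1..n. norm (of_nat k ^ p * z ^ k :: complex))"
      by (rule norm_sum)
    also have "\<dots> \<le> (\<Sum>k=1..n. real n ^ p)"
      by (intro sum_mono) (auto simp: norm_mult norm_power nz intro!: power_mono)
    also have "\<dots> = real n ^ p * real n" by simp
    finally show ?thesis .
  qed
  have nontriv: "norm (\<Sum>k=1..n. of_nat k ^ p * z ^ k) \<le> real n ^ p * (9 / \<bar>w\<bar>)" if w0: "w \<noteq> 0"
  proof -
    define \<delta> where "\<delta> = norm (1 - z)"
    have d: "\<delta> \<ge> \<bar>w\<bar>/3" unfolding \<delta>_def z_def vw by (rule norm_one_minus_exp[OF w])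
    then have dpos: "\<delta> > 0" using w0 by simp
    have g0: "norm (\<Sum>k=1..n. z ^ k) \<le> 2 / \<delta>"
    proof -
      have "\<delta> * norm (\<Sum>k=1..n. z ^ k) = norm (z - z ^ (n+1))"
        unfolding \<delta>_def by (metis geo0 norm_mult)
      also have "\<dots> \<le> norm z + norm (z ^ (n+1))" by (rule norm_triangle_ineq4)
      also have "\<dots> = 2" using nz nzk[of "n+1"] by (simp del: power_Suc)
      finally show ?thesis using dpos by (simp add: field_simps mult.commute)
    qed
    show ?thesis
    proof (cases "p = 0")
      case True
      have "2 / \<delta> \<le> 9 / \<bar>w\<bar>" using d dpos w0 by (simp add: field_simps)
      then show ?thesis using g0 True by simp
    next
      case False
      then have p1: "p = 1" using p by simp
      have "\<delta> * norm (\<Sum>k=1..n. of_nat k * z ^ k) = norm ((\<Sum>k=1..n. z ^ k) - of_nat n * z ^ (n+1))"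
        unfolding \<delta>_def by (metis geo1 norm_mult)
      also have "\<dots> \<le> norm (\<Sum>k=1..n. z ^ k) + norm (of_nat n * z ^ (n+1) :: complex)" by (rule norm_triangle_ineq4)
      also have "\<dots> \<le> 2 / \<delta> + real n" using g0 nz by (simp add: norm_mult norm_power)
      finally have h: "\<delta> * norm (\<Sum>k=1..n. of_nat k * z ^ k) \<le> 2 / \<delta> + real n" .
      have "norm (\<Sum>k=1..n. of_nat k * z ^ k) \<le> real n * (9 / \<bar>w\<bar>)"
      proof (cases "\<delta> * real n \<ge> 1")
        case True
        then have "2 / \<delta> \<le> 2 * real n" using dpos by (simp add: field_simps)
        then have "\<delta> * norm (\<Sum>k=1..n. of_nat k * z ^ k) \<le> 3 * real n" using h by simp
        then have "norm (\<Sum>k=1..n. of_nat k * z ^ k) \<le> 3 * real n / \<delta>" using dpos by (simp add: field_simps mult.commute)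
        also have "\<dots> \<le> real n * (9 / \<bar>w\<bar>)" using d dpos w0 by (simp add: field_simps) (metis mult.assoc mult.commute mult_right_mono of_nat_0_le_iff)
        finally show ?thesis .
      next
        case False
        have "norm (\<Sum>k=1..n. of_nat k * z ^ k) \<le> real n * real n" using triv p1 by simp
        also have "real n \<le> 1 / \<delta>" using False dpos by (simp add: field_simps)
        then have "real n * real n \<le> real n * (1 / \<delta>)" by (intro mult_left_mono) auto
        also have "1 / \<delta> \<le> 9 / \<bar>w\<bar>" using d dpos w0 by (simp add: field_simps)
        then have "real n * (1 / \<delta>) \<le> real n * (9 / \<bar>w\<bar>)" by (intro mult_left_mono) auto
        finally show ?thesis .
      qed
      then show ?thesis using p1 by simp
    qed
  qed
  have "norm (\<Sum>k=1..n. of_nat k ^ p * z ^ k) \<le> real n ^ p * (18 * real n / (9 + real n * \<bar>w\<bar>))"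
  proof (cases "real n * \<bar>w\<bar> \<le> 9")
    case True
    have pos: "9 + real n * \<bar>w\<bar> > 0" by (simp add: add_pos_nonneg)
    have "real n * (9 + real n * \<bar>w\<bar>) \<le> 18 * real n" using True n by (simp add: algebra_simps)
    then have "real n \<le> 18 * real n / (9 + real n * \<bar>w\<bar>)" using pos by (simp add: le_divide_eq)
    then show ?thesis using triv by (meson mult_left_mono order_trans zero_le_power of_nat_0_le_iff)
  next
    case False
    then have w0: "w \<noteq> 0" by auto
    have "9 / \<bar>w\<bar> \<le> 18 * real n / (9 + real n * \<bar>w\<bar>)" using False w0 n
      by (simp add: field_simps)
    then show ?thesis using nontriv[OF w0] by (meson mult_left_mono order_trans zero_le_power of_nat_0_le_iff)
  qed
  then show ?thesis by (simp add: z_def)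
qed



definition Hf :: "nat \<Rightarrow> real \<Rightarrow> real \<Rightarrow> real" where
  "Hf n \<alpha> r = (18 * real n) powr (2 - \<alpha>) * (9 + real n * r) powr (\<alpha> - 2)"

definition Ff :: "nat \<Rightarrow> real \<Rightarrow> real \<Rightarrow> real" where
  "Ff n \<alpha> r = - ((18 * real n) powr (2 - \<alpha>) / ((1 - \<alpha>) * real n)) * (9 + real n * r) powr (\<alpha> - 1)"

definition I0 :: "nat \<Rightarrow> real \<Rightarrow> real" where "I0 n \<alpha> = - Ff n \<alpha> 0"

lemma Ff_deriv:
  assumes n: "n \<ge> 1" and a: "\<alpha> < 1" and r: "9 + real n * r > 0"
  shows "(Ff n \<alpha> has_field_derivative Hf n \<alpha> r) (at r)"
proof -
  have "(Ff n \<alpha> has_field_derivative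
     - ((18 * real n) powr (2 - \<alpha>) / ((1 - \<alpha>) * real n)) * ((\<alpha> - 1) * (9 + real n * r) powr (\<alpha> - 1 - 1) * real n)) (at r)"
    unfolding Ff_def using r a by (auto intro!: derivative_eq_intros)
  moreover have "- ((18 * real n) powr (2 - \<alpha>) / ((1 - \<alpha>) * real n)) * ((\<alpha> - 1) * (9 + real n * r) powr (\<alpha> - 1 - 1) * real n)
       = Hf n \<alpha> r"
    using n a by (simp add: Hf_def field_simps)
  ultimately show ?thesis by simp
qed

lemma Ff_cont: "n \<ge> 1 \<Longrightarrow> \<alpha> < 1 \<Longrightarrow> 0 \<le> r \<Longrightarrow> isCont (Ff n \<alpha>) r"
proof -
  assume a: "n \<ge> 1" "\<alpha> < 1" "0 \<le> r"
  then have "9 + real n * r > 0" by (simp add: add_pos_nonneg)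
  then show ?thesis unfolding Ff_def using a by (auto intro!: continuous_intros)
qed

lemma Ff_range:
  assumes n: "n \<ge> 1" and a: "0 < \<alpha>" "\<alpha> < 1" and r: "0 \<le> r"
  shows "0 \<le> Ff n \<alpha> r - Ff n \<alpha> 0" "Ff n \<alpha> r - Ff n \<alpha> 0 \<le> I0 n \<alpha>"
proof -
  define K where "K = (18 * real n) powr (2 - \<alpha>) / ((1 - \<alpha>) * real n)"
  have K: "K > 0" using n a by (simp add: K_def)
  have "(9 + real n * r) powr (\<alpha> - 1) \<le> 9 powr (\<alpha> - 1)"
    using a r by (intro powr_mono2') auto
  then have "K * (9 + real n * r) powr (\<alpha> - 1) \<le> K * 9 powr (\<alpha> - 1)" using K by simp
  then show "0 \<le> Ff n \<alpha> r - Ff n \<alpha> 0" by (simp add: Ff_def K_def[symmetric])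
  have "0 \<le> K * (9 + real n * r) powr (\<alpha> - 1)" using K by simp
  then show "Ff n \<alpha> r - Ff n \<alpha> 0 \<le> I0 n \<alpha>" by (simp add: I0_def Ff_def K_def[symmetric])
qed

definition Phi :: "nat \<Rightarrow> real \<Rightarrow> real \<Rightarrow> real" where
  "Phi n \<alpha> w = Ff n \<alpha> (max w 0) - Ff n \<alpha> (max (- w) 0)"

lemma Phi_cont: "n \<ge> 1 \<Longrightarrow> \<alpha> < 1 \<Longrightarrow> continuous_on A (Phi n \<alpha>)"
proof -
  assume a: "n \<ge> 1" "\<alpha> < 1"
  have c1: "isCont (\<lambda>w. Ff n \<alpha> (max w 0)) w" for w
    by (rule continuous_at_compose[of _ "\<lambda>x. max x 0", unfolded o_def, OF _ Ff_cont[OF a]]) (auto intro!: continuous_intros)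
  have c2: "isCont (\<lambda>w. Ff n \<alpha> (max (- w) 0)) w" for w
    by (rule continuous_at_compose[of _ "\<lambda>x. max (-x) 0", unfolded o_def, OF _ Ff_cont[OF a]]) (auto intro!: continuous_intros)
  show ?thesis unfolding Phi_def
    by (intro continuous_at_imp_continuous_on ballI continuous_intros c1 c2)
qed

lemma Phi_bound:
  assumes n: "n \<ge> 1" and a: "0 < \<alpha>" "\<alpha> < 1"
  shows "\<bar>Phi n \<alpha> w\<bar> \<le> I0 n \<alpha>"
proof (cases "w \<ge> 0")
  case True
  then show ?thesis using Ff_range[OF n a, of w] by (simp add: Phi_def)
next
  case False
  then show ?thesis using Ff_range[OF n a, of "-w"] by (simp add: Phi_def)
qed

lemma Phi_deriv:
  assumes n: "n \<ge> 1" and a: "\<alpha> < 1" and w: "w \<noteq> 0"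
  shows "(Phi n \<alpha> has_field_derivative Hf n \<alpha> \<bar>w\<bar>) (at w)"
proof (cases "w > 0")
  case True
  have "((\<lambda>w. Ff n \<alpha> w - Ff n \<alpha> 0) has_field_derivative Hf n \<alpha> \<bar>w\<bar>) (at w)"
    using Ff_deriv[OF n a, of w] True by (auto intro!: derivative_eq_intros simp: add_pos_nonneg)
  then show ?thesis
    by (rule has_field_derivative_transform_within_open[of _ _ _ "{0<..}"]) (use True in \<open>auto simp: Phi_def\<close>)
next
  case False
  then have wn: "w < 0" using w by simp
  have "((\<lambda>w. Ff n \<alpha> 0 - Ff n \<alpha> (- w)) has_field_derivative Hf n \<alpha> \<bar>w\<bar>) (at w)"
  proof -
    have "real n * w \<le> 0" using wn by (simp add: mult_nonneg_nonpos)
    then have pos: "9 + real n * (- w) > 0" by simp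
    have "((\<lambda>w. Ff n \<alpha> (- w)) has_field_derivative Hf n \<alpha> (- w) * (- 1)) (at w)"
      by (rule DERIV_chain2[where g="\<lambda>w. - w", OF Ff_deriv[OF n a pos]]) (auto intro!: derivative_eq_intros)
    then have "((\<lambda>w. Ff n \<alpha> 0 - Ff n \<alpha> (- w)) has_field_derivative 0 - Hf n \<alpha> (- w) * (- 1)) (at w)"
      by (intro DERIV_diff) auto
    then show ?thesis using wn by simp
  qed
  then show ?thesis
    by (rule has_field_derivative_transform_within_open[of _ _ _ "{..<0}"]) (use wn in \<open>auto simp: Phi_def\<close>)
qed

lemma Hf_integral:
  assumes n: "n \<ge> 1" and a: "0 < \<alpha>" "\<alpha> < 1"
  shows "((\<lambda>u. Hf n \<alpha> \<bar>c - u\<bar>) has_integral (Phi n \<alpha> c - Phi n \<alpha> (c - 2 * pi))) {0..2*pi}"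
proof -
  have cont: "continuous_on {0..2*pi} (\<lambda>u. Phi n \<alpha> (c - u))"
  proof -
    have "continuous_on {0..2*pi} (\<lambda>u. c - u)" by (intro continuous_intros)
    moreover have "continuous_on ((\<lambda>u. c - u) ` {0..2*pi}) (Phi n \<alpha>)" by (rule Phi_cont[OF n a(2)])
    ultimately show ?thesis using continuous_on_compose[of "{0..2*pi}" "\<lambda>u. c - u" "Phi n \<alpha>"] by (simp add: o_def)
  qed
  have der: "((\<lambda>u. Phi n \<alpha> (c - u)) has_vector_derivative - Hf n \<alpha> \<bar>c - u\<bar>) (at u)"
    if u: "u \<in> {0<..<2*pi} - {c}" for u
  proof -
    from u have "c - u \<noteq> 0" by auto
    then have "((\<lambda>u. Phi n \<alpha> (c - u)) has_field_derivative Hf n \<alpha> \<bar>c - u\<bar> * (- 1)) (at u)"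
      by (intro DERIV_chain2[where g="\<lambda>u. c - u", OF Phi_deriv[OF n a(2)]]) (auto intro!: derivative_eq_intros)
    then show ?thesis
      by (simp add: has_real_derivative_iff_has_vector_derivative)
  qed
  have "((\<lambda>u. - Hf n \<alpha> \<bar>c - u\<bar>) has_integral (Phi n \<alpha> (c - 2*pi) - Phi n \<alpha> (c - 0))) {0..2*pi}"
    by (rule fundamental_theorem_of_calculus_interior_strong[of "{c}" 0 "2*pi" "\<lambda>u. Phi n \<alpha> (c - u)", OF _ _ der cont]) auto
  from has_integral_neg[OF this] show ?thesis by simp
qed

lemma Hf_integral_bound:
  assumes n: "n \<ge> 1" and a: "0 < \<alpha>" "\<alpha> < 1"
  shows "(\<lambda>u. Hf n \<alpha> \<bar>c - u\<bar>) integrable_on {0..2*pi}"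
    "integral {0..2*pi} (\<lambda>u. Hf n \<alpha> \<bar>c - u\<bar>) \<le> 2 * I0 n \<alpha>"
proof -
  note h = Hf_integral[OF assms, of c]
  then show "(\<lambda>u. Hf n \<alpha> \<bar>c - u\<bar>) integrable_on {0..2*pi}" by blast
  have "integral {0..2*pi} (\<lambda>u. Hf n \<alpha> \<bar>c - u\<bar>) = Phi n \<alpha> c - Phi n \<alpha> (c - 2 * pi)"
    using h by (rule integral_unique)
  also have "\<dots> \<le> 2 * I0 n \<alpha>"
    using Phi_bound[OF assms, of c] Phi_bound[OF assms, of "c - 2*pi"] by linarith
  finally show "integral {0..2*pi} (\<lambda>u. Hf n \<alpha> \<bar>c - u\<bar>) \<le> 2 * I0 n \<alpha>" .
qed



definition Mf :: "nat \<Rightarrow> real \<Rightarrow> real" where "Mf n r = 18 * real n / (9 + real n * r)"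

lemma Mf_pos: "n \<ge> 1 \<Longrightarrow> r \<ge> 0 \<Longrightarrow> Mf n r > 0"
  unfolding Mf_def by (simp add: add_pos_nonneg)

lemma Mf_mono: "n \<ge> 1 \<Longrightarrow> 0 \<le> r \<Longrightarrow> r \<le> r' \<Longrightarrow> Mf n r' \<le> Mf n r"
  unfolding Mf_def by (intro divide_left_mono) (auto simp: add_pos_nonneg mult_left_mono intro!: mult_pos_pos)

lemma Mf_Hf: "n \<ge> 1 \<Longrightarrow> r \<ge> 0 \<Longrightarrow> Mf n r powr (2 - \<alpha>) = Hf n \<alpha> r"
proof -
  assume a: "n \<ge> 1" "r \<ge> 0"
  then have pos: "9 + real n * r > 0" by (simp add: add_pos_nonneg)
  have "Mf n r powr (2 - \<alpha>) = (18 * real n) powr (2 - \<alpha>) / (9 + real n * r) powr (2 - \<alpha>)"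
    unfolding Mf_def using pos by (simp add: powr_divide)
  also have "\<dots> = Hf n \<alpha> r"
    unfolding Hf_def using pos powr_minus[of "9 + real n * r" "2 - \<alpha>"] by (simp add: divide_inverse)
  finally show ?thesis .
qed

lemma pair_bound1:
  assumes n: "n \<ge> 1" and a: "0 < \<alpha>" "\<alpha> < 1" and r: "0 \<le> r2" "r2 \<le> r1" and d: "0 < d" "d / 2 \<le> r1"
  shows "Mf n r1 * Mf n r2 \<le> Mf n (d/2) powr \<alpha> * Hf n \<alpha> r2"
proof -
  have p1: "Mf n r1 > 0" "Mf n r2 > 0" "Mf n (d/2) > 0" using Mf_pos[OF n] r d by auto
  have "Mf n r1 = Mf n r1 powr \<alpha> * Mf n r1 powr (1 - \<alpha>)"
    using p1 by (simp add: powr_add[symmetric])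
  also have "\<dots> \<le> Mf n (d/2) powr \<alpha> * Mf n r2 powr (1 - \<alpha>)"
    using p1 a Mf_mono[OF n, of "d/2" r1] Mf_mono[OF n, of r2 r1] r d
    by (intro mult_mono powr_mono2) auto
  finally have "Mf n r1 * Mf n r2 \<le> Mf n (d/2) powr \<alpha> * Mf n r2 powr (1 - \<alpha>) * Mf n r2"
    using p1 by (intro mult_right_mono) auto
  also have "\<dots> = Mf n (d/2) powr \<alpha> * (Mf n r2 powr (1 - \<alpha>) * Mf n r2 powr 1)"
    using p1 by (simp add: mult.assoc abs_of_pos[OF p1(2)])
  also have "\<dots> = Mf n (d/2) powr \<alpha> * Mf n r2 powr (2 - \<alpha>)"
    by (subst powr_add[symmetric]) (simp add: algebra_simps)
  also have "\<dots> = Mf n (d/2) powr \<alpha> * Hf n \<alpha> r2" using Mf_Hf[OF n r(1)] by simp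
  finally show ?thesis .
qed

lemma Hf_nonneg: "0 \<le> Hf n \<alpha> r"
  unfolding Hf_def by simp

lemma pair_bound:
  assumes n: "n \<ge> 1" and a: "0 < \<alpha>" "\<alpha> < 1" and r: "0 \<le> r1" "0 \<le> r2" and d: "0 < d" "d \<le> r1 + r2"
  shows "Mf n r1 * Mf n r2 \<le> Mf n (d/2) powr \<alpha> * (Hf n \<alpha> r1 + Hf n \<alpha> r2)"
proof (cases "r2 \<le> r1")
  case True
  then have "Mf n r1 * Mf n r2 \<le> Mf n (d/2) powr \<alpha> * Hf n \<alpha> r2"
    using d r by (intro pair_bound1[OF n a]) auto
  also have "\<dots> \<le> Mf n (d/2) powr \<alpha> * (Hf n \<alpha> r1 + Hf n \<alpha> r2)"
    by (intro mult_left_mono) (auto simp: Hf_nonneg)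
  finally show ?thesis .
next
  case False
  then have "Mf n r2 * Mf n r1 \<le> Mf n (d/2) powr \<alpha> * Hf n \<alpha> r1"
    using d r by (intro pair_bound1[OF n a]) auto
  also have "\<dots> \<le> Mf n (d/2) powr \<alpha> * (Hf n \<alpha> r1 + Hf n \<alpha> r2)"
    by (intro mult_left_mono) (auto simp: Hf_nonneg)
  finally show ?thesis by (simp add: mult.commute)
qed

definition Kf :: "nat \<Rightarrow> nat \<Rightarrow> real \<Rightarrow> complex" where
  "Kf n p v = (\<Sum>k=1..n. of_nat k ^ p * exp (\<i> * complex_of_real v) ^ k)"

lemma spectral_S:
  fixes \<rho> :: "int \<Rightarrow> real" and \<psi> :: "real \<Rightarrow> real"
  assumes \<psi>_cont: "continuous_on UNIV \<psi>"
    and spectral: "\<forall>k. complex_of_real (\<rho> k) =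
        (1 / (2 * pi)) * integral {0..2*pi}
          (\<lambda>u. exp (- \<i> * of_int k * complex_of_real u) * complex_of_real (\<psi> u))"
  shows "(\<Sum>k=1..n. \<Sum>l=1..n. complex_of_real (\<rho> (int k - int l) * real k ^ p * real l ^ q) * exp (\<i> * complex_of_real (real k * s - real l * t)))
    = (1 / (2 * pi)) * integral {0..2*pi} (\<lambda>u. complex_of_real (\<psi> u) * Kf n p (s - u) * Kf n q (u - t))"
proof -
  define E where "E k l u = exp (- \<i> * of_int (int k - int l) * complex_of_real u) * complex_of_real (\<psi> u)" for k l u
  define W where "W k l = complex_of_real (real k ^ p * real l ^ q) * exp (\<i> * complex_of_real (real k * s - real l * t))" for k l
  have intE: "(\<lambda>u. E k l u * W k l) integrable_on {0..2*pi}" for k l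
    unfolding E_def
    by (intro integrable_continuous_interval continuous_intros continuous_on_compose2[OF continuous_on_of_real]
          continuous_on_subset[OF \<psi>_cont]) auto
  have "(\<Sum>k=1..n. \<Sum>l=1..n. complex_of_real (\<rho> (int k - int l) * real k ^ p * real l ^ q) * exp (\<i> * complex_of_real (real k * s - real l * t)))
     = (\<Sum>k=1..n. \<Sum>l=1..n. (1 / (2 * pi)) * integral {0..2*pi} (\<lambda>u. E k l u * W k l))"
  proof (intro sum.cong refl)
    fix k l
    have "integral {0..2*pi} (\<lambda>u. E k l u * W k l) = integral {0..2*pi} (E k l) * W k l"
      by (rule integral_mult_left)
    moreover have "complex_of_real (\<rho> (int k - int l) * real k ^ p * real l ^ q) * exp (\<i> * complex_of_real (real k * s - real l * t))
        = complex_of_real (\<rho> (int k - int l)) * W k l"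
      by (simp add: W_def mult.assoc)
    moreover have "complex_of_real (\<rho> (int k - int l)) = (1 / (2 * pi)) * integral {0..2*pi} (E k l)"
      using spectral unfolding E_def by simp
    ultimately show "complex_of_real (\<rho> (int k - int l) * real k ^ p * real l ^ q) * exp (\<i> * complex_of_real (real k * s - real l * t))
      = (1 / (2 * pi)) * integral {0..2*pi} (\<lambda>u. E k l u * W k l)" by simp
  qed
  also have "\<dots> = (1 / (2 * pi)) * integral {0..2*pi} (\<lambda>u. \<Sum>k=1..n. \<Sum>l=1..n. E k l u * W k l)"
    using intE by (simp add: integral_sum integrable_sum sum_distrib_left)
  also have "(\<lambda>u. \<Sum>k=1..n. \<Sum>l=1..n. E k l u * W k l) = (\<lambda>u. complex_of_real (\<psi> u) * Kf n p (s - u) * Kf n q (u - t))"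
  proof
    fix u
    have e: "E k l u * W k l = complex_of_real (\<psi> u) * (of_nat k ^ p * exp (\<i> * complex_of_real (s - u)) ^ k) *
              (of_nat l ^ q * exp (\<i> * complex_of_real (u - t)) ^ l)" for k l
    proof -
      have "exp (- \<i> * of_int (int k - int l) * complex_of_real u) * exp (\<i> * complex_of_real (real k * s - real l * t))
          = exp (\<i> * complex_of_real (s - u)) ^ k * exp (\<i> * complex_of_real (u - t)) ^ l"
        unfolding exp_of_nat_mult[symmetric] exp_add[symmetric]
        by (rule arg_cong[where f=exp]) (simp add: algebra_simps)
      then show ?thesis unfolding E_def W_def by (simp add: algebra_simps)
    qed
    show "(\<Sum>k=1..n. \<Sum>l=1..n. E k l u * W k l) = complex_of_real (\<psi> u) * Kf n p (s - u) * Kf n q (u - t)"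
    proof -
      have "complex_of_real (\<psi> u) * Kf n p (s - u) * Kf n q (u - t) =
        (\<Sum>k=1..n. complex_of_real (\<psi> u) * (of_nat k ^ p * exp (\<i> * complex_of_real (s - u)) ^ k)) *
        (\<Sum>l=1..n. of_nat l ^ q * exp (\<i> * complex_of_real (u - t)) ^ l)"
        unfolding Kf_def by (simp only: sum_distrib_left)
      also have "\<dots> = (\<Sum>k=1..n. \<Sum>l=1..n. complex_of_real (\<psi> u) * (of_nat k ^ p * exp (\<i> * complex_of_real (s - u)) ^ k) *
              (of_nat l ^ q * exp (\<i> * complex_of_real (u - t)) ^ l))"
        by (rule sum_product)
      finally show ?thesis unfolding e by simp
    qed
  qed
  finally show ?thesis .
qed



lemma near_int: "\<exists>j::int. \<bar>v - 2 * pi * of_int j\<bar> \<le> pi"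
proof -
  define j where "j = \<lfloor>v / (2 * pi) + 1/2\<rfloor>"
  have "of_int j \<le> v / (2 * pi) + 1/2" "v / (2 * pi) + 1/2 < of_int j + 1"
    unfolding j_def by linarith+
  then have "2 * pi * of_int j \<le> v + pi" "v - pi < 2 * pi * of_int j"
    by (simp_all add: field_simps)
  then show ?thesis by (intro exI[of _ j]) auto
qed

lemma tdist_le: "tdist s t \<le> \<bar>s - t - 2 * pi * real_of_int k\<bar>"
  unfolding tdist_def by (rule cINF_lower) (auto intro: bdd_belowI[of _ 0])

lemma exp_shift: "exp (\<i> * complex_of_real (w + 2 * pi * real_of_int j)) = exp (\<i> * complex_of_real w)"
proof -
  have "exp (\<i> * complex_of_real (w + 2 * pi * real_of_int j)) = exp (\<i> * complex_of_real w) * exp ((2 * of_int j * pi) * \<i>)"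
    by (simp add: exp_add[symmetric] algebra_simps)
  also have "exp ((2 * of_int j * pi) * \<i>) = 1" by (rule exp_integer_2pi) simp
  finally show ?thesis by simp
qed

lemma Kf_bound:
  assumes n: "n \<ge> 1" and p: "p \<le> 1" and v: "\<bar>v - 2 * pi * real_of_int j\<bar> \<le> pi"
  shows "norm (Kf n p v) \<le> real n ^ p * Mf n \<bar>v - 2 * pi * real_of_int j\<bar>"
proof -
  have "exp (\<i> * complex_of_real v) = exp (\<i> * complex_of_real (v - 2 * pi * real_of_int j))"
    using exp_shift[of "v - 2 * pi * real_of_int j" j] by simp
  from kernel_bound[OF n p v this] show ?thesis unfolding Kf_def Mf_def .
qed

lemma in_three:
  fixes j m :: int and x :: real
  assumes "x \<le> of_int j" "of_int j \<le> x + 2" "m = \<lceil>x\<rceil>"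
  shows "j \<in> {m, m+1, m+2}"
proof -
  have "m \<le> j" using assms by (simp add: ceiling_le_iff)
  moreover have "j \<le> m + 2"
  proof -
    have "of_int j \<le> of_int m + (2::real)" using assms le_of_int_ceiling[of x] by linarith
    then show ?thesis by linarith
  qed
  ultimately show ?thesis by auto
qed



lemma pointwise:
  assumes n: "n \<ge> 1" and p: "p \<le> 1" and q: "q \<le> 1" and a: "0 < \<alpha>" "\<alpha> < 1"
    and d: "0 < tdist s t" and u: "u \<in> {0..2*pi}" and B: "0 \<le> \<psi> u" "\<psi> u \<le> B"
  shows "norm (complex_of_real (\<psi> u) * Kf n p (s - u) * Kf n q (u - t)) \<le>
     B * real n ^ (p + q) * Mf n (tdist s t / 2) powr \<alpha> *
       ((\<Sum>j\<in>{\<lceil>(s - 3*pi)/(2*pi)\<rceil>, \<lceil>(s - 3*pi)/(2*pi)\<rceil>+1, \<lceil>(s - 3*pi)/(2*pi)\<rceil>+2}. Hf n \<alpha> \<bar>(s - 2*pi* of_int j) - u\<bar>) +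
        (\<Sum>j\<in>{\<lceil>(- t - pi)/(2*pi)\<rceil>, \<lceil>(- t - pi)/(2*pi)\<rceil>+1, \<lceil>(- t - pi)/(2*pi)\<rceil>+2}. Hf n \<alpha> \<bar>(t + 2*pi* of_int j) - u\<bar>))"
    (is "_ \<le> B * ?N * ?P * (?S1 + ?S2)")
proof -
  obtain j1 :: int where j1: "\<bar>(s - u) - 2 * pi * of_int j1\<bar> \<le> pi" using near_int by blast
  obtain j2 :: int where j2: "\<bar>(u - t) - 2 * pi * of_int j2\<bar> \<le> pi" using near_int by blast
  define r1 where "r1 = \<bar>(s - u) - 2 * pi * of_int j1\<bar>"
  define r2 where "r2 = \<bar>(u - t) - 2 * pi * of_int j2\<bar>"
  have K1: "norm (Kf n p (s - u)) \<le> real n ^ p * Mf n r1" unfolding r1_def by (rule Kf_bound[OF n p j1])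
  have K2: "norm (Kf n q (u - t)) \<le> real n ^ q * Mf n r2" unfolding r2_def by (rule Kf_bound[OF n q j2])
  have dr: "tdist s t \<le> r1 + r2"
  proof -
    have "tdist s t \<le> \<bar>s - t - 2 * pi * real_of_int (j1 + j2)\<bar>" by (rule tdist_le)
    also have "\<dots> \<le> r1 + r2" unfolding r1_def r2_def by (simp add: algebra_simps)
    finally show ?thesis .
  qed
  have pr: "Mf n r1 * Mf n r2 \<le> ?P * (Hf n \<alpha> r1 + Hf n \<alpha> r2)"
    by (rule pair_bound[OF n a _ _ d dr]) (auto simp: r1_def r2_def)
  have h1: "Hf n \<alpha> r1 \<le> ?S1"
  proof -
    have "j1 \<in> {\<lceil>(s - 3*pi)/(2*pi)\<rceil>, \<lceil>(s - 3*pi)/(2*pi)\<rceil>+1, \<lceil>(s - 3*pi)/(2*pi)\<rceil>+2}"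
    proof (rule in_three[OF _ _ refl])
      have "s - 3 * pi \<le> 2 * pi * of_int j1" "2 * pi * of_int j1 \<le> s + pi" using j1 u by auto
      then show "(s - 3*pi)/(2*pi) \<le> of_int j1" "of_int j1 \<le> (s - 3*pi)/(2*pi) + 2"
        by (simp_all add: field_simps)
    qed
    moreover have "r1 = \<bar>(s - 2*pi* of_int j1) - u\<bar>" unfolding r1_def by (simp add: algebra_simps)
    ultimately show ?thesis by (auto intro!: member_le_sum simp: Hf_nonneg simp del: insert_iff)
  qed
  have h2: "Hf n \<alpha> r2 \<le> ?S2"
  proof -
    have "j2 \<in> {\<lceil>(- t - pi)/(2*pi)\<rceil>, \<lceil>(- t - pi)/(2*pi)\<rceil>+1, \<lceil>(- t - pi)/(2*pi)\<rceil>+2}"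
    proof (rule in_three[OF _ _ refl])
      have "- t - pi \<le> 2 * pi * of_int j2" "2 * pi * of_int j2 \<le> - t + 3 * pi" using j2 u by auto
      then show "(- t - pi)/(2*pi) \<le> of_int j2" "of_int j2 \<le> (- t - pi)/(2*pi) + 2"
        by (simp_all add: field_simps)
    qed
    moreover have "r2 = \<bar>(t + 2*pi* of_int j2) - u\<bar>" unfolding r2_def by (simp add: algebra_simps)
    ultimately show ?thesis by (auto intro!: member_le_sum simp: Hf_nonneg simp del: insert_iff)
  qed
  have Mpos: "0 \<le> Mf n r1" "0 \<le> Mf n r2" using Mf_pos[OF n] by (auto simp: r1_def r2_def less_imp_le)
  have "norm (complex_of_real (\<psi> u) * Kf n p (s - u) * Kf n q (u - t)) = \<psi> u * norm (Kf n p (s - u)) * norm (Kf n q (u - t))"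
    using B by (simp add: norm_mult)
  also have "\<dots> \<le> B * (real n ^ p * Mf n r1) * (real n ^ q * Mf n r2)"
    using B K1 K2 Mpos by (intro mult_mono) auto
  also have "\<dots> = B * ?N * (Mf n r1 * Mf n r2)" by (simp add: power_add algebra_simps)
  also have "\<dots> \<le> B * ?N * (?P * (Hf n \<alpha> r1 + Hf n \<alpha> r2))"
    using pr B by (intro mult_left_mono) auto
  also have "\<dots> \<le> B * ?N * (?P * (?S1 + ?S2))"
    using h1 h2 B by (intro mult_left_mono) auto
  finally show ?thesis by (simp add: mult.assoc)
qed



theorem lemma1:
  fixes M :: "'w measure" and a b :: "nat \<Rightarrow> 'w \<Rightarrow> real"
    and \<rho> :: "int \<Rightarrow> real" and \<psi> :: "real \<Rightarrow> real"
    and p q :: nat and \<alpha> :: real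
  assumes "prob_space M"
    and ga: "gaussian_family M a {1..}" and gb: "gaussian_family M b {1..}"
    and ma: "\<forall>k\<ge>1. a k \<in> borel_measurable M" and mb: "\<forall>k\<ge>1. b k \<in> borel_measurable M"
    and ia: "\<forall>k\<ge>1. integrable M (\<lambda>\<omega>. (a k \<omega>)\<^sup>2)"
    and ib: "\<forall>k\<ge>1. integrable M (\<lambda>\<omega>. (b k \<omega>)\<^sup>2)"
    and ca: "\<forall>k\<ge>1. integral\<^sup>L M (a k) = 0" and cb: "\<forall>k\<ge>1. integral\<^sup>L M (b k) = 0"
    and cova: "\<forall>k\<ge>1. \<forall>l\<ge>1. integral\<^sup>L M (\<lambda>\<omega>. a k \<omega> * a l \<omega>) = \<rho> (int k - int l)"
    and covb: "\<forall>k\<ge>1. \<forall>l\<ge>1. integral\<^sup>L M (\<lambda>\<omega>. b k \<omega> * b l \<omega>) = \<rho> (int k - int l)"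
    and indep: "prob_space.indep_var M
        (Pi\<^sub>M {1..} (\<lambda>_. borel)) (\<lambda>\<omega>. \<lambda>k\<in>{1..}. a k \<omega>)
        (Pi\<^sub>M {1..} (\<lambda>_. borel)) (\<lambda>\<omega>. \<lambda>k\<in>{1..}. b k \<omega>)"
    and \<psi>_cont: "continuous_on UNIV \<psi>"
    and \<psi>_per: "\<forall>u. \<psi> (u + 2 * pi) = \<psi> u"
    and \<psi>_pos: "\<forall>u. \<psi> u > 0"
    and spectral: "\<forall>k. complex_of_real (\<rho> k) =
        (1 / (2 * pi)) * integral {0..2*pi}
          (\<lambda>u. exp (- \<i> * of_int k * complex_of_real u) * complex_of_real (\<psi> u))"
    and "p \<le> 1" and "q \<le> 1" and "0 < \<alpha>" and "\<alpha> < 1"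
  shows "\<exists>C. \<forall>n\<ge>1. \<forall>s t. tdist s t > 0 \<longrightarrow>
           \<bar>rnd M a b p q n s t\<bar> \<le> C * real n ^ (p + q) / (real n * tdist s t) powr \<alpha>"
proof -
  note P = assms(1)
  have pq: "p \<le> 1" "q \<le> 1" and a: "0 < \<alpha>" "\<alpha> < 1" by fact+
  obtain x0 where x0: "x0 \<in> {0..2*pi}" "\<forall>y\<in>{0..2*pi}. \<psi> y \<le> \<psi> x0"
    using continuous_attains_sup[of "{0..2*pi}" \<psi>] continuous_on_subset[OF \<psi>_cont] by auto
  define B where "B = \<psi> x0"
  have Bpos: "B > 0" using \<psi>_pos by (simp add: B_def)
  define C1 where "C1 = 18 powr (2 - \<alpha>) * 9 powr (\<alpha> - 1) / (1 - \<alpha>)"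
  define C where "C = 12 * B / (2 * pi) * 36 powr \<alpha> * C1"
  show ?thesis
  proof (intro exI[of _ C] allI impI)
    fix n :: nat and s t :: real
    assume n: "n \<ge> 1" and D: "tdist s t > 0"
    define N where "N = real n ^ (p + q)"
    define S where "S = (\<Sum>k=1..n. \<Sum>l=1..n. complex_of_real (\<rho> (int k - int l) * real k ^ p * real l ^ q) * exp (\<i> * complex_of_real (real k * s - real l * t)))"
    define f where "f u = complex_of_real (\<psi> u) * Kf n p (s - u) * Kf n q (u - t)" for u
    define PP where "PP = Mf n (tdist s t / 2) powr \<alpha>"
    define m1 where "m1 = \<lceil>(s - 3*pi)/(2*pi)\<rceil>"
    define m2 where "m2 = \<lceil>(- t - pi)/(2*pi)\<rceil>"
    define g where "g u = B * N * PP * ((\<Sum>j\<in>{m1, m1+1, m1+2}. Hf n \<alpha> \<bar>(s - 2*pi * of_int j) - u\<bar>) +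
        (\<Sum>j\<in>{m2, m2+1, m2+2}. Hf n \<alpha> \<bar>(t + 2*pi * of_int j) - u\<bar>))" for u
    have I0pos: "I0 n \<alpha> \<ge> 0" using Ff_range[OF n a, of 0] by simp
    have Npos: "N \<ge> 0" by (simp add: N_def)
    have PPpos: "PP \<ge> 0" by (simp add: PP_def)
    have rnd_eq: "rnd M a b p q n s t = Dfm \<rho> n p q s t"
    proof -
      have "(\<lambda>x y. rn M a b n x y) = (\<lambda>x y. (1 / real n) * (\<Sum>k=1..n. \<Sum>l=1..n. \<rho> (int k - int l) * cos (real k * x - real l * y)))"
        by (intro ext rn_formula[OF P ma mb ia ib ca cb cova covb indep])
      then have "rnd M a b p q n s t = ((deriv ^^ p) (\<lambda>x. (deriv ^^ q) (\<lambda>y. (1 / real n) * (\<Sum>k=1..n. \<Sum>l=1..n. \<rho> (int k - int l) * cos (real k * x - real l * y))) t)) s"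
        unfolding rnd_def by metis
      also have "\<dots> = Dfm \<rho> n p q s t" by (rule deriv_R[OF pq])
      finally show ?thesis .
    qed
    have re: "Dfm \<rho> n p q s t = (1 / real n) * Re (cc p q * S)"
    proof -
      have "Re (cc p q * S) = (\<Sum>k=1..n. \<Sum>l=1..n. \<rho> (int k - int l) * real k ^ p * real l ^ q *
          Re (cc p q * exp (\<i> * complex_of_real (real k * s - real l * t))))"
        unfolding S_def sum_distrib_left Re_sum
        by (intro sum.cong refl) (simp add: mult.left_commute[of "cc p q"])
      then show ?thesis unfolding Dfm_def by simp
    qed
    have ncc: "norm (cc p q) = 1" by (simp add: cc_def norm_mult norm_power)
    have abs1: "\<bar>Dfm \<rho> n p q s t\<bar> \<le> (1 / real n) * norm S"
    proof -
      have "\<bar>Re (cc p q * S)\<bar> \<le> norm (cc p q * S)" by (rule abs_Re_le_cmod)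
      also have "\<dots> = norm S" by (simp add: norm_mult ncc)
      finally show ?thesis unfolding re by (simp add: abs_mult divide_right_mono)
    qed
    have S_eq: "S = (1 / (2 * pi)) * integral {0..2*pi} f"
      unfolding S_def f_def by (rule spectral_S[OF \<psi>_cont spectral])
    have fint: "f integrable_on {0..2*pi}"
      unfolding f_def Kf_def
      by (intro integrable_continuous_interval continuous_intros continuous_on_compose2[OF continuous_on_of_real]
          continuous_on_subset[OF \<psi>_cont]) auto
    have Hint: "(\<lambda>u. Hf n \<alpha> \<bar>c - u\<bar>) integrable_on {0..2*pi}" for c
      by (rule Hf_integral_bound(1)[OF n a])
    have Hle: "integral {0..2*pi} (\<lambda>u. Hf n \<alpha> \<bar>c - u\<bar>) \<le> 2 * I0 n \<alpha>" for c
      by (rule Hf_integral_bound(2)[OF n a])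
    have gint1: "(\<lambda>u. \<Sum>j\<in>{m1, m1+1, m1+2}. Hf n \<alpha> \<bar>(s - 2*pi * of_int j) - u\<bar>) integrable_on {0..2*pi}"
      by (intro integrable_sum Hint) auto
    have gint2: "(\<lambda>u. \<Sum>j\<in>{m2, m2+1, m2+2}. Hf n \<alpha> \<bar>(t + 2*pi * of_int j) - u\<bar>) integrable_on {0..2*pi}"
      by (intro integrable_sum Hint) auto
    have gint: "g integrable_on {0..2*pi}"
      unfolding g_def by (intro integrable_on_mult_right integrable_add gint1 gint2)
    have normf: "norm (integral {0..2*pi} f) \<le> integral {0..2*pi} g"
    proof (rule integral_norm_bound_integral[OF fint gint])
      fix u assume u: "u \<in> {0..2*pi}"
      have "0 \<le> \<psi> u" "\<psi> u \<le> B" using \<psi>_pos x0 u by (auto simp: B_def less_imp_le)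
      from pointwise[where \<psi>=\<psi>, OF n pq a D u this] show "norm (f u) \<le> g u"
        unfolding f_def g_def N_def PP_def m1_def m2_def .
    qed
    have intg: "integral {0..2*pi} g \<le> B * N * PP * (12 * I0 n \<alpha>)"
    proof -
      have s1: "integral {0..2*pi} (\<lambda>u. \<Sum>j\<in>{m1, m1+1, m1+2}. Hf n \<alpha> \<bar>(s - 2*pi * of_int j) - u\<bar>) \<le> 6 * I0 n \<alpha>"
      proof -
        have "integral {0..2*pi} (\<lambda>u. \<Sum>j\<in>{m1, m1+1, m1+2}. Hf n \<alpha> \<bar>(s - 2*pi * of_int j) - u\<bar>)
           = (\<Sum>j\<in>{m1, m1+1, m1+2}. integral {0..2*pi} (\<lambda>u. Hf n \<alpha> \<bar>(s - 2*pi * of_int j) - u\<bar>))"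
          by (intro integral_sum Hint) auto
        also have "\<dots> \<le> of_nat (card {m1, m1+1, m1+2}) * (2 * I0 n \<alpha>)"
          by (intro sum_bounded_above Hle)
        also have "\<dots> = 6 * I0 n \<alpha>" by simp
        finally show ?thesis .
      qed
      have s2: "integral {0..2*pi} (\<lambda>u. \<Sum>j\<in>{m2, m2+1, m2+2}. Hf n \<alpha> \<bar>(t + 2*pi * of_int j) - u\<bar>) \<le> 6 * I0 n \<alpha>"
      proof -
        have "integral {0..2*pi} (\<lambda>u. \<Sum>j\<in>{m2, m2+1, m2+2}. Hf n \<alpha> \<bar>(t + 2*pi * of_int j) - u\<bar>)
           = (\<Sum>j\<in>{m2, m2+1, m2+2}. integral {0..2*pi} (\<lambda>u. Hf n \<alpha> \<bar>(t + 2*pi * of_int j) - u\<bar>))"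
          by (intro integral_sum Hint) auto
        also have "\<dots> \<le> of_nat (card {m2, m2+1, m2+2}) * (2 * I0 n \<alpha>)"
          by (intro sum_bounded_above Hle)
        also have "\<dots> = 6 * I0 n \<alpha>" by simp
        finally show ?thesis .
      qed
      have "integral {0..2*pi} g = B * N * PP * (integral {0..2*pi} (\<lambda>u. \<Sum>j\<in>{m1, m1+1, m1+2}. Hf n \<alpha> \<bar>(s - 2*pi * of_int j) - u\<bar>)
          + integral {0..2*pi} (\<lambda>u. \<Sum>j\<in>{m2, m2+1, m2+2}. Hf n \<alpha> \<bar>(t + 2*pi * of_int j) - u\<bar>))"
        unfolding g_def by (simp only: integral_mult_right integral_add[OF gint1 gint2])
      also have "\<dots> \<le> B * N * PP * (12 * I0 n \<alpha>)"
        using s1 s2 Bpos Npos PPpos by (intro mult_left_mono) auto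
      finally show ?thesis .
    qed
    have PPle: "PP \<le> (36 / tdist s t) powr \<alpha>"
    proof -
      have np: "real n > 0" using n by simp
      have "Mf n (tdist s t / 2) = 18 * real n / (9 + real n * (tdist s t / 2))" by (simp add: Mf_def)
      also have "\<dots> \<le> 18 * real n / (real n * (tdist s t / 2))"
        using np D by (intro divide_left_mono) (auto intro!: mult_pos_pos add_pos_pos)
      also have "\<dots> = 36 / tdist s t" using np by (simp add: field_simps)
      finally have "Mf n (tdist s t / 2) \<le> 36 / tdist s t" .
      then show ?thesis unfolding PP_def using a Mf_pos[OF n, of "tdist s t / 2"] D
        by (intro powr_mono2) auto
    qed
    have "\<bar>rnd M a b p q n s t\<bar> \<le> (1 / real n) * ((1 / (2 * pi)) * (B * N * PP * (12 * I0 n \<alpha>)))"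
    proof -
      have "norm S \<le> (1 / (2 * pi)) * (B * N * PP * (12 * I0 n \<alpha>))"
      proof -
        have "norm S = (1 / (2 * pi)) * norm (integral {0..2*pi} f)"
          unfolding S_eq norm_mult by (simp add: norm_divide)
        also have "\<dots> \<le> (1 / (2 * pi)) * (B * N * PP * (12 * I0 n \<alpha>))"
          using normf intg by (intro mult_left_mono) auto
        finally show ?thesis .
      qed
      then show ?thesis unfolding rnd_eq using abs1 by (smt (verit) divide_nonneg_nonneg mult_left_mono of_nat_0_le_iff)
    qed
    also have "\<dots> \<le> (1 / real n) * ((1 / (2 * pi)) * (B * N * (36 / tdist s t) powr \<alpha> * (12 * I0 n \<alpha>)))"
      using PPle Bpos Npos I0pos by (intro mult_left_mono mult_right_mono) auto
    also have "\<dots> = C * real n ^ (p + q) / (real n * tdist s t) powr \<alpha>"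
    proof -
      have np: "real n > 0" using n by simp
      have e1: "I0 n \<alpha> = (18 * real n) powr (2 - \<alpha>) / ((1 - \<alpha>) * real n) * 9 powr (\<alpha> - 1)"
        unfolding I0_def Ff_def by simp
      have e2: "(18 * real n) powr (2 - \<alpha>) = 18 powr (2 - \<alpha>) * (real n * real n / real n powr \<alpha>)"
        using np by (simp add: powr_mult powr_diff powr_numeral power2_eq_square)
      have e3: "(36 / tdist s t) powr \<alpha> = 36 powr \<alpha> / tdist s t powr \<alpha>"
        using D by (simp add: powr_divide)
      have e4: "(real n * tdist s t) powr \<alpha> = real n powr \<alpha> * tdist s t powr \<alpha>"
        using D np by (simp add: powr_mult)
      have pos: "real n powr \<alpha> > 0" "tdist s t powr \<alpha> > 0" "1 - \<alpha> > 0" using np D a by auto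
      show ?thesis
        unfolding e1 e2 e3 e4 C_def C1_def N_def using pos np
        by (simp add: field_simps)
    qed
    finally show "\<bar>rnd M a b p q n s t\<bar> \<le> C * real n ^ (p + q) / (real n * tdist s t) powr \<alpha>" .
  qed
qed

end
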